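(* Under assumptions (AR-B1) and (AR-B2), for every $\boldsymbol\theta=(\rho,\boldsymbol\beta,\sigma)\in\boldsymbol\Theta$ the Kullback–Leibler divergence rate $h(\boldsymbol\theta)=\lim_{n\to\infty}n^{-1}E_P[\log(p(\mathbf X_n)/f_{\boldsymbol\theta}(\mathbf X_n))]$ exists and, writing $A_0=\frac{\sigma_0^2+\boldsymbol\beta_0'\Sigma_z\boldsymbol\beta_0}{1-\rho_0^2}$, $$h(\boldsymbol\theta)=\log\frac{\sigma}{\sigma_0}+\Big(\frac{1}{2\sigma^2}-\frac{1}{2\sigma_0^2}\Big)A_0+\Big(\frac{\rho^2}{2\sigma^2}-\frac{\rho_0^2}{2\sigma_0^2}\Big)A_0+\frac{\boldsymbol\beta'\Sigma_z\boldsymbol\beta}{2\sigma^2}-\frac{\boldsymbol\beta_0'\Sigma_z\boldsymbol\beta_0}{2\sigma_0^2}-\Big(\frac{\rho}{\sigma^2}-\frac{\rho_0}{\sigma_0^2}\Big)\rho_0A_0-\Big(\frac{\boldsymbol\beta}{\sigma^2}-\frac{\boldsymbol\beta_0}{\sigma_0^2}\Big)'\Sigma_z\boldsymbol\beta_0.$$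
   Context: True model $P$: $x_t=\rho_0x_{t-1}+\mathbf z_t'\boldsymbol\beta_0+\epsilon_t$ for $t=1,2,\ldots$, with $x_0=0$, $|\rho_0|<1$, $\epsilon_t$ i.i.d. $N(0,\sigma_0^2)$, where $\mathbf z_t\in\mathbb R^{m+1}$ are given (non-random) covariate vectors. Postulated model: the same equation with unknown $\boldsymbol\theta=(\rho,\boldsymbol\beta,\sigma)\in\boldsymbol\Theta=\mathbb R\times\mathbb R^{m+1}\times(0,\infty)$ in place of $\boldsymbol\theta_0=(\rho_0,\boldsymbol\beta_0,\sigma_0)$, i.e. $f_{\boldsymbol\theta}(\mathbf X_n)=\prod_{t=1}^n(2\pi\sigma^2)^{-1/2}\exp\{-(x_t-\rho x_{t-1}-\mathbf z_t'\boldsymbol\beta)^2/(2\sigma^2)\}$ for $\mathbf X_n=(x_1,\ldots,x_n)$, and $p=f_{\boldsymbol\theta_0}$. Assumptions: (AR-B1) as $n\to\infty$, $n^{-1}\sum_{t=1}^n\mathbf z_t\to\mathbf 0$, $n^{-1}\sum_{t=1}^n\mathbf z_{t+k}\mathbf z_t'\to\mathbf 0$ for every $k\ge1$, and $n^{-1}\sum_{t=1}^n\mathbf z_t\mathbf z_t'\to\Sigma_z$; (AR-B2) $\sup_{t\ge1}|\mathbf z_t'\boldsymbol\beta_0|<C$ for some $C>0$. *)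

theory Defs
  imports "HOL-Probability.Probability"
begin

fun ar_proc :: "real \<Rightarrow> real ^ 'm \<Rightarrow> (nat \<Rightarrow> real ^ 'm) \<Rightarrow> (nat \<Rightarrow> 'a \<Rightarrow> real) \<Rightarrow> nat \<Rightarrow> 'a \<Rightarrow> real"
  where
  "ar_proc \<rho> \<beta> z eps 0 \<omega> = 0"
| "ar_proc \<rho> \<beta> z eps (Suc t) \<omega> =
     \<rho> * ar_proc \<rho> \<beta> z eps t \<omega> + z (Suc t) \<bullet> \<beta> + eps (Suc t) \<omega>"

definition ar_density :: "real \<Rightarrow> real ^ 'm \<Rightarrow> real \<Rightarrow> (nat \<Rightarrow> real ^ 'm) \<Rightarrow> nat \<Rightarrow> (nat \<Rightarrow> real) \<Rightarrow> real"
  where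
  "ar_density \<rho> \<beta> \<sigma> z n x =
     (\<Prod>t = 1..n. normal_density 0 \<sigma> (x t - \<rho> * x (t - 1) - z t \<bullet> \<beta>))"

definition outer :: "real ^ 'm \<Rightarrow> real ^ 'm \<Rightarrow> real ^ 'm ^ 'm"
  where "outer u v = (\<chi> i j. u $ i * v $ j)"

end

theory Submission
  imports Defs
begin


lemma shift_null:
  fixes g :: "nat \<Rightarrow> real"
  assumes "g \<longlonglongrightarrow> 0"
  shows "(\<lambda>n. real (n - k) / real n * g (n - k)) \<longlonglongrightarrow> 0"
proof (rule Lim_null_comparison)
  have "(\<lambda>n. g (n - k)) \<longlonglongrightarrow> 0"
    by (rule filterlim_compose[OF assms filterlim_minus_const_nat_at_top])
  then show "(\<lambda>n. \<bar>g (n - k)\<bar>) \<longlonglongrightarrow> 0" by (simp add: tendsto_rabs_zero_iff)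
  show "\<forall>\<^sub>F n in sequentially. norm (real (n - k) / real n * g (n - k)) \<le> \<bar>g (n - k)\<bar>"
  proof (intro always_eventually allI)
    fix n
    have "real (n - k) / real n \<le> 1" "0 \<le> real (n - k) / real n"
      by (auto simp: divide_le_eq_1)
    then have "real (n - k) / real n * \<bar>g (n - k)\<bar> \<le> \<bar>g (n - k)\<bar>"
      by (intro mult_left_le_one_le) auto
    then show "norm (real (n - k) / real n * g (n - k)) \<le> \<bar>g (n - k)\<bar>"
      using \<open>0 \<le> real (n - k) / real n\<close> by (simp add: abs_mult)
  qed
qed

lemma reindex_shift:
  fixes c d :: "nat \<Rightarrow> real"
  shows "(\<Sum>t=1..n. (if k < t - 1 then c (t - 1 - k) else 0) * d t)
       = (\<Sum>s=1..n - Suc k. c s * d (s + Suc k))"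
proof (induction n)
  case 0 then show ?case by simp
next
  case (Suc n)
  show ?case
  proof (cases "k < n")
    case True
    then have e: "Suc n - Suc k = Suc (n - Suc k)" by simp
    have e2: "Suc (n - Suc k) + Suc k = Suc n" "n - k = Suc (n - Suc k)" using True by auto
    have "(\<Sum>t=1..Suc n. (if k < t - 1 then c (t - 1 - k) else 0) * d t)
       = (\<Sum>s=1..n - Suc k. c s * d (s + Suc k)) + c (n - k) * d (Suc n)"
      using Suc True by simp
    also have "\<dots> = (\<Sum>s=1..Suc (n - Suc k). c s * d (s + Suc k))"
      by (subst sum.cl_ivl_Suc) (use e2 in auto)
    finally show ?thesis using e by simp
  next
    case False
    then show ?thesis using Suc by simp
  qed
qed

lemma cross_avg:
  fixes c d :: "nat \<Rightarrow> real" and r C D :: real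
  assumes r: "\<bar>r\<bar> < 1" and cb: "\<And>t. t \<ge> 1 \<Longrightarrow> \<bar>c t\<bar> \<le> C"
    and db: "\<And>n. (\<Sum>t=1..n. \<bar>d t\<bar>) \<le> D * real n"
    and lim: "\<And>k. k \<ge> 1 \<Longrightarrow> (\<lambda>n. (1/real n) * (\<Sum>s=1..n. c s * d (s+k))) \<longlonglongrightarrow> 0"
  shows "(\<lambda>n. (1/real n) * (\<Sum>t=1..n. (\<Sum>j<t-1. r^j * c (t-1-j)) * d t)) \<longlonglongrightarrow> 0"
proof -
  have C0: "0 \<le> C" using cb[of 1] by auto
  have D0: "0 \<le> D" using db[of 1] by auto
  define a where "a k n = r^k * ((1/real n) * (\<Sum>t=1..n. (if k < t - 1 then c (t - 1 - k) else 0) * d t))" for k n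
  have a_lim: "(\<lambda>n. a k n) \<longlonglongrightarrow> 0" for k
  proof -
    have "(1/real n) * (\<Sum>t=1..n. (if k < t - 1 then c (t - 1 - k) else 0) * d t)
        = real (n - Suc k) / real n * ((1/real (n - Suc k)) * (\<Sum>s=1..n - Suc k. c s * d (s + Suc k)))" for n
      unfolding reindex_shift by (cases "n - Suc k = 0") auto
    moreover have "(\<lambda>n. real (n - Suc k) / real n * ((1/real (n - Suc k)) * (\<Sum>s=1..n - Suc k. c s * d (s + Suc k)))) \<longlonglongrightarrow> 0"
      by (rule shift_null[OF lim]) simp
    ultimately show ?thesis unfolding a_def by (simp add: tendsto_mult_right_zero)
  qed
  have a_bound: "norm (a k n) \<le> \<bar>r\<bar>^k * (C*D)" for k n
  proof (cases "n = 0")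
    case True then show ?thesis using C0 D0 by (simp add: a_def)
  next
    case False
    have "\<bar>\<Sum>t=1..n. (if k < t - 1 then c (t - 1 - k) else 0) * d t\<bar>
        \<le> (\<Sum>t=1..n. \<bar>(if k < t - 1 then c (t - 1 - k) else 0) * d t\<bar>)"
      by (rule sum_abs)
    also have "\<dots> \<le> (\<Sum>t=1..n. C * \<bar>d t\<bar>)"
    proof (rule sum_mono)
      fix t assume "t \<in> {1..n}"
      show "\<bar>(if k < t - 1 then c (t - 1 - k) else 0) * d t\<bar> \<le> C * \<bar>d t\<bar>"
        using cb[of "t - 1 - k"] C0 by (auto simp: abs_mult intro!: mult_right_mono)
    qed
    also have "\<dots> \<le> C * (D * real n)"
      using db[of n] C0 by (simp add: sum_distrib_left[symmetric] mult_left_mono)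
    finally have "\<bar>\<Sum>t=1..n. (if k < t - 1 then c (t - 1 - k) else 0) * d t\<bar> \<le> C * (D * real n)" .
    then have X: "\<bar>(1/real n) * (\<Sum>t=1..n. (if k < t - 1 then c (t - 1 - k) else 0) * d t)\<bar> \<le> C * D"
      using False by (simp add: abs_mult field_simps)
    have N: "norm (a k n) = \<bar>r\<bar>^k * \<bar>(1/real n) * (\<Sum>t=1..n. (if k < t - 1 then c (t - 1 - k) else 0) * d t)\<bar>"
      unfolding a_def real_norm_def abs_mult[of "r^k"] power_abs ..
    have "\<bar>r\<bar>^k * \<bar>(1/real n) * (\<Sum>t=1..n. (if k < t - 1 then c (t - 1 - k) else 0) * d t)\<bar> \<le> \<bar>r\<bar>^k * (C * D)"
      by (rule mult_left_mono[OF X]) simp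
    then show ?thesis unfolding N .
  qed
  have sumeq: "(\<Sum>k. a k n) = (1/real n) * (\<Sum>t=1..n. (\<Sum>j<t-1. r^j * c (t-1-j)) * d t)" for n
  proof -
    have "(\<Sum>k. a k n) = (\<Sum>k<n. a k n)"
      by (rule suminf_finite) (auto simp: a_def intro!: sum.neutral split: if_splits)
    also have "\<dots> = (1/real n) * (\<Sum>t=1..n. (\<Sum>k<n. (if k < t - 1 then r^k * c (t - 1 - k) else 0)) * d t)"
      unfolding a_def sum_distrib_left sum_distrib_right
      by (subst sum.swap) (auto intro!: sum.cong)
    also have "\<dots> = (1/real n) * (\<Sum>t=1..n. (\<Sum>j<t-1. r^j * c (t-1-j)) * d t)"
    proof -
      have "(\<Sum>k<n. (if k < t - 1 then r^k * c (t - 1 - k) else 0)) = (\<Sum>j<t-1. r^j * c (t-1-j))"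
        if "t \<in> {1..n}" for t
      proof -
        have "(\<Sum>k<n. (if k < t - 1 then r^k * c (t - 1 - k) else 0))
           = (\<Sum>k\<in>{..<n} \<inter> {..<t-1}. r^k * c (t - 1 - k))"
          by (subst sum.inter_restrict) (auto intro!: sum.cong)
        also have "{..<n} \<inter> {..<t-1} = {..<t-1}" using that by auto
        finally show ?thesis .
      qed
      then show ?thesis by (auto intro!: sum.cong)
    qed
    finally show ?thesis .
  qed
  have "summable (\<lambda>k. \<bar>r\<bar>^k * (C*D))"
    using r by (intro summable_mult2 summable_geometric) simp
  from tannerys_theorem[of a "\<lambda>_. 0" sequentially "\<lambda>k. \<bar>r\<bar>^k * (C*D)", OF a_lim _ this]
  have "(\<lambda>n. \<Sum>k. a k n) \<longlonglongrightarrow> (\<Sum>k. (0::real))"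
    using a_bound by (auto intro: always_eventually)
  then show ?thesis using sumeq by simp
qed

lemma rec_bound:
  fixes m e :: "nat \<Rightarrow> real"
  assumes q: "\<bar>q\<bar> < 1" and rec: "\<And>t. m (Suc t) = q * m t + e (Suc t)" and m0: "m 0 = 0"
    and eb: "\<And>t. t \<ge> 1 \<Longrightarrow> \<bar>e t\<bar> \<le> K"
  shows "\<bar>m t\<bar> \<le> K / (1 - \<bar>q\<bar>)"
proof (induction t)
  case 0
  have "0 \<le> K" using eb[of 1] by auto
  then show ?case using m0 q by simp
next
  case (Suc t)
  have "\<bar>m (Suc t)\<bar> \<le> \<bar>q\<bar> * \<bar>m t\<bar> + K"
  proof -
    have "\<bar>m (Suc t)\<bar> \<le> \<bar>q * m t\<bar> + \<bar>e (Suc t)\<bar>" unfolding rec[of t] by (rule abs_triangle_ineq)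
    then show ?thesis using eb[of "Suc t"] by (simp add: abs_mult)
  qed
  also have "\<dots> \<le> \<bar>q\<bar> * (K / (1 - \<bar>q\<bar>)) + K"
    using mult_left_mono[OF Suc.IH abs_ge_zero[of q]] by simp
  also have "\<dots> = K / (1 - \<bar>q\<bar>)" using q by (simp add: field_simps)
  finally show ?case .
qed

lemma rec_avg:
  fixes m e :: "nat \<Rightarrow> real"
  assumes q: "\<bar>q\<bar> < 1" and rec: "\<And>t. m (Suc t) = q * m t + e (Suc t)" and m0: "m 0 = 0"
    and mb: "\<And>t. \<bar>m t\<bar> \<le> B"
    and lim: "(\<lambda>n. (1/real n) * (\<Sum>t=1..n. e t)) \<longlonglongrightarrow> L"
  shows "(\<lambda>n. (1/real n) * (\<Sum>t=1..n. m (t-1))) \<longlonglongrightarrow> L/(1-q)"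
proof -
  have S: "(\<Sum>t=1..n. m t) = (\<Sum>t=1..n. m (t-1)) + m n" for n
    by (induction n) (auto simp: m0)
  have R: "(\<Sum>t=1..n. m t) = q * (\<Sum>t=1..n. m (t-1)) + (\<Sum>t=1..n. e t)" for n
  proof -
    have "(\<Sum>t=1..n. m t) = (\<Sum>t=1..n. q * m (t-1) + e t)"
    proof (rule sum.cong)
      fix t assume "t \<in> {1..n}"
      then obtain s where "t = Suc s" by (cases t) auto
      then show "m t = q * m (t-1) + e t" using rec by simp
    qed simp
    then show ?thesis by (simp add: sum.distrib sum_distrib_left)
  qed
  have q1: "1 - q \<noteq> 0" using q by auto
  have eq: "(1/real n) * (\<Sum>t=1..n. m (t-1)) = ((1/real n) * (\<Sum>t=1..n. e t) - m n / real n) / (1 - q)" for n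
  proof -
    have "(1 - q) * (\<Sum>t=1..n. m (t-1)) = (\<Sum>t=1..n. e t) - m n"
      using S[of n] R[of n] by (simp add: algebra_simps)
    then have "(\<Sum>t=1..n. m (t-1)) = ((\<Sum>t=1..n. e t) - m n) / (1 - q)"
      using q1 by (simp add: field_simps)
    then show ?thesis by (simp add: diff_divide_distrib[symmetric] divide_divide_eq_left mult.commute)
  qed
  have mn: "(\<lambda>n. m n / real n) \<longlonglongrightarrow> 0"
  proof (rule Lim_null_comparison)
    show "\<forall>\<^sub>F n in sequentially. norm (m n / real n) \<le> B / real n"
      using mb by (intro always_eventually allI) (simp add: divide_right_mono)
    show "(\<lambda>n. B / real n) \<longlonglongrightarrow> 0" by (rule lim_const_over_n)
  qed
  have "(\<lambda>n. ((1/real n) * (\<Sum>t=1..n. e t) - m n / real n) / (1 - q)) \<longlonglongrightarrow> (L - 0) / (1 - q)"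
    by (intro tendsto_intros lim mn q1)
  then show ?thesis unfolding eq by simp
qed

lemma avg_outer:
  fixes f g :: "nat \<Rightarrow> real^'m" and L :: "real^'m^'m" and u v :: "real^'m"
  assumes lim: "(\<lambda>n. (1/real n) *\<^sub>R (\<Sum>t=1..n. outer (f t) (g t))) \<longlonglongrightarrow> L"
  shows "(\<lambda>n. (1/real n) * (\<Sum>t=1..n. (f t \<bullet> u) * (g t \<bullet> v))) \<longlonglongrightarrow> u \<bullet> (L *v v)"
proof -
  have comp: "(\<lambda>n. (1/real n) * (\<Sum>t=1..n. f t $ i * g t $ j)) \<longlonglongrightarrow> L $ i $ j" for i j
  proof -
    have "(\<lambda>n. ((1/real n) *\<^sub>R (\<Sum>t=1..n. outer (f t) (g t))) $ i $ j) \<longlonglongrightarrow> L $ i $ j"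
      by (intro tendsto_vec_nth lim)
    then show ?thesis by (simp add: outer_def)
  qed
  have eq: "(1/real n) * (\<Sum>t=1..n. (f t \<bullet> u) * (g t \<bullet> v))
     = (\<Sum>i\<in>UNIV. \<Sum>j\<in>UNIV. u$i * v$j * ((1/real n) * (\<Sum>t=1..n. f t $ i * g t $ j)))" for n
  proof -
    have that: "(f t \<bullet> u) * (g t \<bullet> v) = (\<Sum>i\<in>UNIV. \<Sum>j\<in>UNIV. u$i * v$j * (f t $ i * g t $ j))" for t
      unfolding inner_vec_def sum_product by (simp add: algebra_simps)
    have "(\<Sum>t=1..n. (f t \<bullet> u) * (g t \<bullet> v)) = (\<Sum>i\<in>UNIV. \<Sum>j\<in>UNIV. u$i * v$j * (\<Sum>t=1..n. f t $ i * g t $ j))"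
    proof -
      have "(\<Sum>t=1..n. (f t \<bullet> u) * (g t \<bullet> v)) = (\<Sum>t=1..n. \<Sum>i\<in>UNIV. \<Sum>j\<in>UNIV. u$i * v$j * (f t $ i * g t $ j))"
        using that by simp
      also have "\<dots> = (\<Sum>i\<in>UNIV. \<Sum>t=1..n. \<Sum>j\<in>UNIV. u$i * v$j * (f t $ i * g t $ j))"
        by (rule sum.swap)
      also have "\<dots> = (\<Sum>i\<in>UNIV. \<Sum>j\<in>UNIV. \<Sum>t=1..n. u$i * v$j * (f t $ i * g t $ j))"
        by (intro sum.cong refl sum.swap)
      finally show ?thesis by (simp add: sum_distrib_left)
    qed
    then show ?thesis by (simp add: sum_distrib_left algebra_simps)
  qed
  have eq2: "u \<bullet> (L *v v) = (\<Sum>i\<in>UNIV. \<Sum>j\<in>UNIV. u$i * v$j * (L $ i $ j))"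
    unfolding inner_vec_def matrix_vector_mult_def
    by (simp add: sum_distrib_left algebra_simps)
  show ?thesis unfolding eq eq2
    by (intro tendsto_sum tendsto_mult_left comp)
qed



definition sqint :: "'a measure \<Rightarrow> ('a \<Rightarrow> real) \<Rightarrow> bool" where
  "sqint M f \<longleftrightarrow> f \<in> borel_measurable M \<and> integrable M (\<lambda>x. (f x)^2)"

context prob_space begin

lemma sqint_integrable: "sqint M f \<Longrightarrow> integrable M f"
  unfolding sqint_def
proof (elim conjE, rule Bochner_Integration.integrable_bound[where f="\<lambda>x. 1 + (f x)^2"])
  show "AE x in M. norm (f x) \<le> norm (1 + (f x)^2)"
  proof (intro AE_I2)
    fix x
    have "\<bar>f x\<bar> \<le> 1 + (f x)^2"
    proof (cases "\<bar>f x\<bar> \<le> 1")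
      case True then show ?thesis using zero_le_power2[of "f x"] by linarith
    next
      case False
      then have "\<bar>f x\<bar> * 1 \<le> \<bar>f x\<bar> * \<bar>f x\<bar>" by (intro mult_left_mono) auto
      then show ?thesis by (simp add: power2_eq_square)
    qed
    moreover have "0 \<le> 1 + (f x)^2" by (simp add: add_nonneg_nonneg)
    ultimately show "norm (f x) \<le> norm (1 + (f x)^2)" by simp
  qed
qed auto

lemma sqint_mult: "sqint M f \<Longrightarrow> sqint M g \<Longrightarrow> integrable M (\<lambda>x. f x * g x)"
  unfolding sqint_def
proof (elim conjE, rule Bochner_Integration.integrable_bound[where f="\<lambda>x. (f x)^2 + (g x)^2"])
  fix x
  show "AE x in M. norm (f x * g x) \<le> norm ((f x)^2 + (g x)^2)"
  proof (intro AE_I2)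
    fix x
    have "\<bar>f x * g x\<bar> \<le> (f x)^2 + (g x)^2"
    proof -
      have "0 \<le> (\<bar>f x\<bar> - \<bar>g x\<bar>)^2" by simp
      then have "2 * (\<bar>f x\<bar> * \<bar>g x\<bar>) \<le> \<bar>f x\<bar>^2 + \<bar>g x\<bar>^2"
        by (simp add: power2_eq_square algebra_simps)
      moreover have "0 \<le> \<bar>f x\<bar> * \<bar>g x\<bar>" by simp
      ultimately have "\<bar>f x\<bar> * \<bar>g x\<bar> \<le> \<bar>f x\<bar>^2 + \<bar>g x\<bar>^2" by linarith
      then show ?thesis by (simp add: abs_mult)
    qed
    then show "norm (f x * g x) \<le> norm ((f x)^2 + (g x)^2)" by simp
  qed
qed auto

lemma sqint_add: "sqint M f \<Longrightarrow> sqint M g \<Longrightarrow> sqint M (\<lambda>x. f x + g x)"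
  unfolding sqint_def
proof (elim conjE, intro conjI)
  assume f: "f \<in> borel_measurable M" "integrable M (\<lambda>x. (f x)\<^sup>2)"
    and g: "g \<in> borel_measurable M" "integrable M (\<lambda>x. (g x)\<^sup>2)"
  show "(\<lambda>x. f x + g x) \<in> borel_measurable M" using f g by measurable
  show "integrable M (\<lambda>x. (f x + g x)\<^sup>2)"
  proof (rule Bochner_Integration.integrable_bound[where f="\<lambda>x. 2 * (f x)^2 + 2 * (g x)^2"])
    show "integrable M (\<lambda>x. 2 * (f x)^2 + 2 * (g x)^2)" using f g by auto
    show "(\<lambda>x. (f x + g x)\<^sup>2) \<in> borel_measurable M" using f g by measurable
    show "AE x in M. norm ((f x + g x)\<^sup>2) \<le> norm (2 * (f x)^2 + 2 * (g x)^2)"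
    proof (intro AE_I2)
      fix x
      have "0 \<le> (f x - g x)^2" by simp
      then have "(f x + g x)\<^sup>2 \<le> 2 * (f x)^2 + 2 * (g x)^2"
        by (simp add: power2_eq_square algebra_simps)
      moreover have "0 \<le> 2 * (f x)^2 + 2 * (g x)^2" by simp
      ultimately show "norm ((f x + g x)\<^sup>2) \<le> norm (2 * (f x)^2 + 2 * (g x)^2)"
        by simp
    qed
  qed
qed

lemma sqint_cmult: "sqint M f \<Longrightarrow> sqint M (\<lambda>x. a * f x)"
  unfolding sqint_def by (auto simp: power_mult_distrib)

lemma sqint_const: "sqint M (\<lambda>x. a)"
  unfolding sqint_def by auto

lemma sq_expand:
  assumes U: "sqint M U" and V: "sqint M V"
  shows "expectation (\<lambda>x. (a * U x + b * V x + c)^2)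
       = a^2 * expectation (\<lambda>x. (U x)^2) + b^2 * expectation (\<lambda>x. (V x)^2) + c^2
         + 2*a*b * expectation (\<lambda>x. U x * V x) + 2*a*c * expectation U + 2*b*c * expectation V"
proof -
  have iU: "integrable M U" and iV: "integrable M V" using U V by (auto intro: sqint_integrable)
  have iUV: "integrable M (\<lambda>x. U x * V x)" by (rule sqint_mult[OF U V])
  have iU2: "integrable M (\<lambda>x. (U x)^2)" and iV2: "integrable M (\<lambda>x. (V x)^2)"
    using U V by (auto simp: sqint_def)
  have "expectation (\<lambda>x. (a * U x + b * V x + c)^2)
      = expectation (\<lambda>x. ((a^2 * (U x)^2 + b^2 * (V x)^2) + (2*a*b * (U x * V x) + c^2))
                         + (2*a*c * U x + 2*b*c * V x))"
    by (rule Bochner_Integration.integral_cong) (auto simp: power2_eq_square algebra_simps)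
  also have "\<dots> = ((a^2 * expectation (\<lambda>x. (U x)^2) + b^2 * expectation (\<lambda>x. (V x)^2))
                  + (2*a*b * expectation (\<lambda>x. U x * V x) + c^2))
                  + (2*a*c * expectation U + 2*b*c * expectation V)"
    using iU iV iUV iU2 iV2 by (simp add: prob_space)
  finally show ?thesis by simp
qed

end



fun mseq :: "real \<Rightarrow> (nat \<Rightarrow> real) \<Rightarrow> nat \<Rightarrow> real" where
  "mseq r c 0 = 0"
| "mseq r c (Suc t) = r * mseq r c t + c (Suc t)"

lemma mseq_closed: "mseq r c t = (\<Sum>j<t. r^j * c (t - j))"
proof (induction t)
  case 0 then show ?case by simp
next
  case (Suc t)
  have "(\<Sum>j<Suc t. r^j * c (Suc t - j)) = c (Suc t) + (\<Sum>j<t. r^(Suc j) * c (t - j))"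
    by (subst sum.lessThan_Suc_shift) simp
  also have "\<dots> = c (Suc t) + r * (\<Sum>j<t. r^j * c (t - j))"
    by (simp add: sum_distrib_left mult.assoc)
  finally show ?case using Suc by simp
qed

lemma ln_nd: "u > 0 \<Longrightarrow> ln (normal_density 0 u x) = - ln (sqrt (2*pi* u^2)) - x^2/(2* u^2)"
  by (simp add: normal_density_def ln_mult ln_div)

lemma ln_sqrt_diff: "u > 0 \<Longrightarrow> v > 0 \<Longrightarrow> ln (sqrt (2*pi* u^2)) - ln (sqrt (2*pi* v^2)) = ln (u / v)"
proof -
  assume uv: "u > 0" "v > 0"
  have "sqrt (2*pi* u^2) = sqrt (2*pi) * u" "sqrt (2*pi* v^2) = sqrt (2*pi) * v"
    using uv by (simp_all add: real_sqrt_mult)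
  then show ?thesis using uv by (simp add: ln_mult ln_div)
qed

lemma final_alg:
  fixes Kc s s0 r0 r B P Q :: real
  assumes s: "s > 0" and s0: "s0 > 0" and r0: "\<bar>r0\<bar> < 1"
  shows "Kc - 1/2 + s0^2/(2* s^2) + (r0 - r)^2/(2* s^2) * ((B + s0^2)/(1 - r0^2))
           + 1/(2* s^2) * (B - 2*Q + P) + (r0 - r)/s^2 * 0
       = Kc + (1 / (2 * s^2) - 1 / (2 * s0^2)) * ((s0^2 + B)/(1 - r0^2))
            + (r^2 / (2 * s^2) - r0^2 / (2 * s0^2)) * ((s0^2 + B)/(1 - r0^2))
            + P / (2 * s^2) - B / (2 * s0^2)
            - (r / s^2 - r0 / s0^2) * r0 * ((s0^2 + B)/(1 - r0^2))
            - (Q / s^2 - B / s0^2)"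
proof -
  have r1: "1 - r0^2 \<noteq> 0"
  proof -
    have "r0^2 < 1" using r0 by (simp add: abs_square_less_1)
    then show ?thesis by simp
  qed
  define A where "A = (s0^2 + B)/(1 - r0^2)"
  have eA: "(B + s0^2)/(1 - r0^2) = A" "(s0^2 + B)/(1 - r0^2) = A" unfolding A_def by (simp_all add: add.commute)
  have hB: "B = A * (1 - r0^2) - s0^2" unfolding A_def using r1 by simp
  have ne: "s \<noteq> 0" "s0 \<noteq> 0" using s s0 by auto
  show ?thesis unfolding eA
    apply (subst hB)+
    using ne apply (simp add: field_simps)
    apply algebra
    done
qed



theorem lemma3:
  fixes M :: "'a measure"
    and eps :: "nat \<Rightarrow> 'a \<Rightarrow> real"
    and z :: "nat \<Rightarrow> real ^ 'm"
    and \<rho>0 \<sigma>0 \<rho> \<sigma> :: real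
    and \<beta>0 \<beta> :: "real ^ 'm"
    and \<Sigma>z :: "real ^ 'm ^ 'm"
  assumes "prob_space M"
    and "prob_space.indep_vars M (\<lambda>_. borel) eps ({1..} :: nat set)"
    and "\<And>t. t \<ge> 1 \<Longrightarrow> distributed M lborel (eps t) (normal_density 0 \<sigma>0)"
    and "\<sigma>0 > 0" and "\<bar>\<rho>0\<bar> < 1"
    and "\<sigma> > 0"
    and B1a: "(\<lambda>n. (1 / real n) *\<^sub>R (\<Sum>t = 1..n. z t)) \<longlonglongrightarrow> 0"
    and B1b: "\<And>k. k \<ge> 1 \<Longrightarrow>
               (\<lambda>n. (1 / real n) *\<^sub>R (\<Sum>t = 1..n. outer (z (t + k)) (z t))) \<longlonglongrightarrow> 0"
    and B1c: "(\<lambda>n. (1 / real n) *\<^sub>R (\<Sum>t = 1..n. outer (z t) (z t))) \<longlonglongrightarrow> \<Sigma>z"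
    and B2: "\<exists>C > 0. \<forall>t \<ge> 1. \<bar>z t \<bullet> \<beta>0\<bar> < C"
  shows "let X = ar_proc \<rho>0 \<beta>0 z eps;
             A0 = (\<sigma>0\<^sup>2 + \<beta>0 \<bullet> (\<Sigma>z *v \<beta>0)) / (1 - \<rho>0\<^sup>2)
         in (\<lambda>n. (1 / real n) *
               prob_space.expectation M (\<lambda>\<omega>.
                  ln (ar_density \<rho>0 \<beta>0 \<sigma>0 z n (\<lambda>t. X t \<omega>)
                      / ar_density \<rho> \<beta> \<sigma> z n (\<lambda>t. X t \<omega>))))
            \<longlonglongrightarrow>
            ln (\<sigma> / \<sigma>0)
            + (1 / (2 * \<sigma>\<^sup>2) - 1 / (2 * \<sigma>0\<^sup>2)) * A0
            + (\<rho>\<^sup>2 / (2 * \<sigma>\<^sup>2) - \<rho>0\<^sup>2 / (2 * \<sigma>0\<^sup>2)) * A0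
            + \<beta> \<bullet> (\<Sigma>z *v \<beta>) / (2 * \<sigma>\<^sup>2)
            - \<beta>0 \<bullet> (\<Sigma>z *v \<beta>0) / (2 * \<sigma>0\<^sup>2)
            - (\<rho> / \<sigma>\<^sup>2 - \<rho>0 / \<sigma>0\<^sup>2) * \<rho>0 * A0
            - ((1 / \<sigma>\<^sup>2) *\<^sub>R \<beta> - (1 / \<sigma>0\<^sup>2) *\<^sub>R \<beta>0) \<bullet> (\<Sigma>z *v \<beta>0)"
proof -
  interpret P: prob_space M by fact
  note ind = assms(2) and D = assms(3)
  have s0: "\<sigma>0 > 0" and r0: "\<bar>\<rho>0\<bar> < 1" and s: "\<sigma> > 0" using assms by auto
  define X where "X = ar_proc \<rho>0 \<beta>0 z eps"
  define c where "c t = z t \<bullet> \<beta>0" for t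
  define w where "w = \<beta>0 - \<beta>"
  define dd where "dd t = z t \<bullet> w" for t
  define a where "a = \<rho>0 - \<rho>"
  define mu where "mu = mseq \<rho>0 c"
  obtain C0 where C0: "C0 > 0" "\<And>t. t \<ge> 1 \<Longrightarrow> \<bar>c t\<bar> \<le> C0"
    using B2 unfolding c_def by (auto intro: less_imp_le)

  have e_meas: "eps t \<in> borel_measurable M" if "t \<ge> 1" for t
    using distributed_measurable[OF D[OF that]] by simp
  have e_sq: "sqint M (eps t)" if "t \<ge> 1" for t
  proof -
    have "integrable lborel (\<lambda>x. normal_density 0 \<sigma>0 x * x^2)"
      using integrable_normal_moment[where \<mu>=0 and \<sigma>=\<sigma>0 and k=2] s0 by simp
    then have "integrable M (\<lambda>x. (eps t x)^2)"
      using distributed_integrable[OF D[OF that], of "\<lambda>x. x^2"] by simp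
    then show ?thesis using e_meas[OF that] by (simp add: sqint_def)
  qed
  have e_mean: "P.expectation (eps t) = 0" if "t \<ge> 1" for t
    using P.normal_distributed_expectation[OF s0 D[OF that]] .
  have e_var: "P.expectation (\<lambda>x. (eps t x)^2) = \<sigma>0^2" if "t \<ge> 1" for t
    using P.normal_distributed_variance[OF s0 D[OF that]] e_mean[OF that] by simp
  have e_indep: "P.expectation (\<lambda>x. eps s x * eps t x) = 0" if "s \<ge> 1" "t \<ge> 1" "s \<noteq> t" for s t
  proof -
    have "P.indep_var (Pi\<^sub>M {s} (\<lambda>_. borel)) (\<lambda>\<omega>. restrict (\<lambda>i. eps i \<omega>) {s})
                      (Pi\<^sub>M {t} (\<lambda>_. borel)) (\<lambda>\<omega>. restrict (\<lambda>i. eps i \<omega>) {t})"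
      using that by (intro P.indep_var_restrict[OF ind]) auto
    from P.indep_var_compose[OF this measurable_component_singleton[of s "{s}" "\<lambda>_. borel"]
        measurable_component_singleton[of t "{t}" "\<lambda>_. borel"]]
    have "P.indep_var borel (eps s) borel (eps t)"
      by (simp add: comp_def)
    then have "P.expectation (\<lambda>x. eps s x * eps t x) = P.expectation (eps s) * P.expectation (eps t)"
      using e_sq that by (intro P.indep_var_lebesgue_integral) (auto intro: P.sqint_integrable)
    then show ?thesis using e_mean that by simp
  qed

  have X_Suc: "X (Suc t) x = \<rho>0 * X t x + 1 * eps (Suc t) x + c (Suc t)" for t x
    by (simp add: X_def c_def)
  have X_sq: "sqint M (X t)" for t
  proof (induction t)
    case 0 then show ?case by (simp add: X_def P.sqint_const)
  next
    case (Suc t)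
    then show ?case unfolding X_Suc
      by (intro P.sqint_add P.sqint_cmult P.sqint_const e_sq) auto
  qed
  have X_int: "integrable M (X t)" for t using X_sq by (rule P.sqint_integrable)
  have X_mean: "P.expectation (X t) = mu t" for t
  proof (induction t)
    case 0 then show ?case by (simp add: X_def mu_def)
  next
    case (Suc t)
    have "P.expectation (X (Suc t)) = \<rho>0 * P.expectation (X t) + P.expectation (eps (Suc t)) + c (Suc t)"
      unfolding X_Suc using X_int[of t] P.sqint_integrable[OF e_sq[of "Suc t"]]
      by (simp add: P.prob_space)
    then show ?case using Suc e_mean[of "Suc t"] by (simp add: mu_def)
  qed
  have X_eps: "P.expectation (\<lambda>x. eps s x * X t x) = 0" if "t < s" for s t
    using that
  proof (induction t)
    case 0 then show ?case by (simp add: X_def)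
  next
    case (Suc t)
    have i1: "integrable M (\<lambda>x. eps s x * X t x)"
      using Suc by (intro P.sqint_mult e_sq X_sq) auto
    have i2: "integrable M (\<lambda>x. eps s x * eps (Suc t) x)"
      using Suc by (intro P.sqint_mult e_sq) auto
    have i3: "integrable M (eps s)" using Suc by (intro P.sqint_integrable e_sq) auto
    have "P.expectation (\<lambda>x. eps s x * X (Suc t) x)
        = P.expectation (\<lambda>x. \<rho>0 * (eps s x * X t x) + eps s x * eps (Suc t) x + c (Suc t) * eps s x)"
      unfolding X_Suc by (rule Bochner_Integration.integral_cong) (auto simp: algebra_simps)
    also have "\<dots> = \<rho>0 * P.expectation (\<lambda>x. eps s x * X t x) + P.expectation (\<lambda>x. eps s x * eps (Suc t) x)
                     + c (Suc t) * P.expectation (eps s)"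
      using i1 i2 i3 by simp
    also have "\<dots> = 0" using Suc e_indep[of s "Suc t"] e_mean[of s] by simp
    finally show ?case .
  qed
  define m2 where "m2 t = P.expectation (\<lambda>x. (X t x)^2)" for t
  define em where "em t = (c t)^2 + \<sigma>0^2 + 2 * \<rho>0 * c t * mu (t - 1)" for t
  have m2_rec: "m2 (Suc t) = \<rho>0^2 * m2 t + em (Suc t)" for t
  proof -
    have es: "sqint M (eps (Suc t))" using e_sq by simp
    have "m2 (Suc t) = \<rho>0^2 * m2 t + 1^2 * \<sigma>0^2 + (c (Suc t))^2
         + 2*\<rho>0*1 * P.expectation (\<lambda>x. X t x * eps (Suc t) x) + 2*\<rho>0*c (Suc t) * mu t
         + 2*1*c (Suc t) * 0"
      unfolding m2_def X_Suc P.sq_expand[OF X_sq es]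
      using e_var[of "Suc t"] e_mean[of "Suc t"] X_mean[of t] by simp
    moreover have "P.expectation (\<lambda>x. X t x * eps (Suc t) x) = 0"
      using X_eps[of t "Suc t"] by (simp add: mult.commute)
    ultimately show ?thesis by (simp add: em_def m2_def)
  qed
  have m2_0: "m2 0 = 0" by (simp add: m2_def X_def)
  have m2_0: "m2 0 = 0" by (simp add: m2_def X_def)

  have mu_bound: "\<bar>mu t\<bar> \<le> C0 / (1 - \<bar>\<rho>0\<bar>)" for t
    by (rule rec_bound[where e=c]) (use r0 C0 in \<open>auto simp: mu_def\<close>)
  define Kem where "Kem = C0^2 + \<sigma>0^2 + 2 * \<bar>\<rho>0\<bar> * C0 * (C0 / (1 - \<bar>\<rho>0\<bar>))"
  have em_bound: "\<bar>em t\<bar> \<le> Kem" if "t \<ge> 1" for t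
  proof -
    have c1: "\<bar>c t\<bar> \<le> C0" using C0 that by auto
    have "\<bar>c t\<bar>^2 \<le> C0^2" using c1 by (intro power_mono) auto
    moreover have "\<bar>2 * \<rho>0 * c t * mu (t - 1)\<bar> \<le> 2 * \<bar>\<rho>0\<bar> * C0 * (C0 / (1 - \<bar>\<rho>0\<bar>))"
      unfolding abs_mult using c1 mu_bound[of "t-1"]
      by (intro mult_mono mult_nonneg_nonneg) auto
    moreover have "\<bar>(c t)^2\<bar> = \<bar>c t\<bar>^2" "\<bar>\<sigma>0^2\<bar> = \<sigma>0^2" by simp_all
    moreover note abs_triangle_ineq[of "(c t)^2 + \<sigma>0^2" "2 * \<rho>0 * c t * mu (t - 1)"]
      abs_triangle_ineq[of "(c t)^2" "\<sigma>0^2"]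
    ultimately show ?thesis unfolding em_def Kem_def by linarith
  qed
  have r2: "\<bar>\<rho>0^2\<bar> < 1" using r0 by (simp add: abs_square_less_1)
  have m2_bound: "\<bar>m2 t\<bar> \<le> Kem / (1 - \<bar>\<rho>0^2\<bar>)" for t
    by (rule rec_bound[where e=em, OF r2 m2_rec m2_0 em_bound])

  define B where "B = \<beta>0 \<bullet> (\<Sigma>z *v \<beta>0)"
  have mu_closed: "mu (t - 1) = (\<Sum>j<t-1. \<rho>0^j * c (t-1-j))" for t
    unfolding mu_def mseq_closed ..
  have L_cc: "(\<lambda>n. (1/real n) * (\<Sum>t=1..n. (c t)^2)) \<longlonglongrightarrow> B"
    using avg_outer[OF B1c, of \<beta>0 \<beta>0] by (simp add: B_def c_def power2_eq_square)
  have c_abs_sum: "(\<Sum>t=1..n. \<bar>c t\<bar>) \<le> C0 * real n" for n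
    using sum_bounded_above[of "{1..n}" "\<lambda>t. \<bar>c t\<bar>" C0] C0 by (simp add: mult.commute)
  have L_cx: "(\<lambda>n. (1/real n) * (\<Sum>t=1..n. mu (t - 1) * c t)) \<longlonglongrightarrow> 0"
  proof -
    have "(\<lambda>n. (1/real n) * (\<Sum>t=1..n. (\<Sum>j<t-1. \<rho>0^j * c (t-1-j)) * c t)) \<longlonglongrightarrow> 0"
    proof (rule cross_avg[OF r0 C0(2) c_abs_sum])
      fix k :: nat assume k: "k \<ge> 1"
      show "(\<lambda>n. (1/real n) * (\<Sum>s=1..n. c s * c (s+k))) \<longlonglongrightarrow> 0"
        using avg_outer[OF B1b[OF k], of \<beta>0 \<beta>0] by (simp add: c_def mult.commute)
    qed
    then show ?thesis unfolding mu_closed .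
  qed
  have nn: "(\<lambda>n. real n / real n) \<longlonglongrightarrow> 1"
  proof (rule Lim_transform_eventually[OF tendsto_const])
    show "\<forall>\<^sub>F n in sequentially. 1 = real n / real n"
      using eventually_ge_at_top[of 1] by eventually_elim simp
  qed
  have L_em: "(\<lambda>n. (1/real n) * (\<Sum>t=1..n. em t)) \<longlonglongrightarrow> B + \<sigma>0^2"
  proof -
    have eq: "(1/real n) * (\<Sum>t=1..n. em t)
       = (1/real n) * (\<Sum>t=1..n. (c t)^2) + \<sigma>0^2 * (real n / real n)
         + 2 * \<rho>0 * ((1/real n) * (\<Sum>t=1..n. mu (t - 1) * c t))" for n
      unfolding em_def by (simp add: sum.distrib sum_distrib_left algebra_simps)
    have "(\<lambda>n. (1/real n) * (\<Sum>t=1..n. (c t)^2) + \<sigma>0^2 * (real n / real n)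
         + 2 * \<rho>0 * ((1/real n) * (\<Sum>t=1..n. mu (t - 1) * c t))) \<longlonglongrightarrow> B + \<sigma>0^2 * 1 + 2 * \<rho>0 * 0"
      by (intro tendsto_intros L_cc nn L_cx)
    then show ?thesis unfolding eq by simp
  qed
  have L_m2: "(\<lambda>n. (1/real n) * (\<Sum>t=1..n. m2 (t - 1))) \<longlonglongrightarrow> (B + \<sigma>0^2) / (1 - \<rho>0^2)"
    by (rule rec_avg[OF r2 m2_rec m2_0 m2_bound L_em])
  have L_dd: "(\<lambda>n. (1/real n) * (\<Sum>t=1..n. (dd t)^2)) \<longlonglongrightarrow> w \<bullet> (\<Sigma>z *v w)"
    using avg_outer[OF B1c, of w w] by (simp add: dd_def power2_eq_square)
  obtain Q where Q: "\<And>n. norm ((1/real n) * (\<Sum>t=1..n. (dd t)^2)) \<le> Q"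
  proof -
    have "Bseq (\<lambda>n. (1/real n) * (\<Sum>t=1..n. (dd t)^2))"
      by (rule convergent_imp_Bseq[OF convergentI[OF L_dd]])
    then obtain K where "\<forall>n. norm ((1/real n) * (\<Sum>t=1..n. (dd t)^2)) \<le> K" by (rule BseqE)
    then show ?thesis using that by blast
  qed
  have dd_abs_sum: "(\<Sum>t=1..n. \<bar>dd t\<bar>) \<le> ((1 + Q)/2) * real n" for n
  proof (cases "n = 0")
    case True then show ?thesis by simp
  next
    case False
    have "(\<Sum>t=1..n. \<bar>dd t\<bar>) \<le> (\<Sum>t=1..n. (1 + (dd t)^2)/2)"
    proof (rule sum_mono)
      fix t
      have "0 \<le> (\<bar>dd t\<bar> - 1)^2" by simp
      then show "\<bar>dd t\<bar> \<le> (1 + (dd t)^2)/2" by (simp add: power2_eq_square algebra_simps)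
    qed
    also have "\<dots> = (real n + (\<Sum>t=1..n. (dd t)^2)) / 2"
      by (simp add: sum.distrib sum_divide_distrib[symmetric])
    also have "(\<Sum>t=1..n. (dd t)^2) = real n * ((1/real n) * (\<Sum>t=1..n. (dd t)^2))"
      using False by simp
    also have "\<dots> \<le> real n * Q"
    proof (intro mult_left_mono)
      show "(1/real n) * (\<Sum>t=1..n. (dd t)^2) \<le> Q"
        using Q[of n] abs_ge_self[of "(1/real n) * (\<Sum>t=1..n. (dd t)^2)"] unfolding real_norm_def by linarith
    qed simp
    finally show ?thesis by (simp add: field_simps)
  qed
  have L_dx: "(\<lambda>n. (1/real n) * (\<Sum>t=1..n. mu (t - 1) * dd t)) \<longlonglongrightarrow> 0"
  proof -
    have "(\<lambda>n. (1/real n) * (\<Sum>t=1..n. (\<Sum>j<t-1. \<rho>0^j * c (t-1-j)) * dd t)) \<longlonglongrightarrow> 0"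
    proof (rule cross_avg[OF r0 C0(2) dd_abs_sum])
      fix k :: nat assume k: "k \<ge> 1"
      show "(\<lambda>n. (1/real n) * (\<Sum>s=1..n. c s * dd (s+k))) \<longlonglongrightarrow> 0"
        using avg_outer[OF B1b[OF k], of w \<beta>0] by (simp add: c_def dd_def mult.commute)
    qed
    then show ?thesis unfolding mu_closed .
  qed

  define R where "R t x = 1 * eps t x + a * X (t - 1) x + dd t" for t x
  define Kc where "Kc = ln (\<sigma> / \<sigma>0)"
  have logeq: "ln (ar_density \<rho>0 \<beta>0 \<sigma>0 z n (\<lambda>t. X t x) / ar_density \<rho> \<beta> \<sigma> z n (\<lambda>t. X t x))
      = (\<Sum>t\<in>{1..n}. Kc + (R t x)^2 / (2*\<sigma>^2) - (eps t x)^2 / (2*\<sigma>0^2))" for n x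
  proof -
    have p1: "ar_density \<rho>0 \<beta>0 \<sigma>0 z n (\<lambda>t. X t x) = (\<Prod>t=1..n. normal_density 0 \<sigma>0 (eps t x))"
      unfolding ar_density_def
    proof (rule prod.cong)
      fix t assume "t \<in> {1..n}"
      then obtain u where "t = Suc u" by (cases t) auto
      then show "normal_density 0 \<sigma>0 (X t x - \<rho>0 * X (t - 1) x - z t \<bullet> \<beta>0) = normal_density 0 \<sigma>0 (eps t x)"
        by (simp add: X_def)
    qed simp
    have p2: "ar_density \<rho> \<beta> \<sigma> z n (\<lambda>t. X t x) = (\<Prod>t=1..n. normal_density 0 \<sigma> (R t x))"
      unfolding ar_density_def
    proof (rule prod.cong)
      fix t assume "t \<in> {1..n}"
      then obtain u where "t = Suc u" by (cases t) auto
      then show "normal_density 0 \<sigma> (X t x - \<rho> * X (t - 1) x - z t \<bullet> \<beta>) = normal_density 0 \<sigma> (R t x)"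
        by (simp add: X_def R_def a_def dd_def w_def inner_diff_right algebra_simps)
    qed simp
    have pos1: "0 < (\<Prod>t=1..n. normal_density 0 \<sigma>0 (eps t x))"
      using s0 by (intro prod_pos normal_density_pos) auto
    have pos2: "0 < (\<Prod>t=1..n. normal_density 0 \<sigma> (R t x))"
      using s by (intro prod_pos normal_density_pos) auto
    have "ln (ar_density \<rho>0 \<beta>0 \<sigma>0 z n (\<lambda>t. X t x) / ar_density \<rho> \<beta> \<sigma> z n (\<lambda>t. X t x))
        = (\<Sum>t=1..n. ln (normal_density 0 \<sigma>0 (eps t x))) - (\<Sum>t=1..n. ln (normal_density 0 \<sigma> (R t x)))"
      unfolding p1 p2 using pos1 pos2 s s0
      by (simp add: ln_div ln_prod normal_density_pos less_imp_neq[symmetric])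
    also have "\<dots> = (\<Sum>t\<in>{1..n}. Kc + (R t x)^2 / (2*\<sigma>^2) - (eps t x)^2 / (2*\<sigma>0^2))"
      unfolding sum_subtractf[symmetric]
    proof (rule sum.cong)
      fix t
      show "ln (normal_density 0 \<sigma>0 (eps t x)) - ln (normal_density 0 \<sigma> (R t x))
          = Kc + (R t x)^2 / (2*\<sigma>^2) - (eps t x)^2 / (2*\<sigma>0^2)"
        using ln_nd[OF s0, of "eps t x"] ln_nd[OF s, of "R t x"] ln_sqrt_diff[OF s s0]
        unfolding Kc_def by simp
    qed simp
    finally show ?thesis .
  qed
  have R_sq: "sqint M (R t)" if "t \<ge> 1" for t
    unfolding R_def[abs_def]
    by (intro P.sqint_add P.sqint_cmult P.sqint_const e_sq[OF that] X_sq)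
  have ER: "P.expectation (\<lambda>x. (R t x)^2) = \<sigma>0^2 + a^2 * m2 (t - 1) + (dd t)^2 + 2 * a * dd t * mu (t - 1)"
    if "t \<ge> 1" for t
  proof -
    have "P.expectation (\<lambda>x. (R t x)^2) = 1^2 * \<sigma>0^2 + a^2 * m2 (t - 1) + (dd t)^2
         + 2*1*a * P.expectation (\<lambda>x. eps t x * X (t - 1) x) + 2*1*dd t * 0 + 2*a*dd t * mu (t - 1)"
      unfolding R_def P.sq_expand[OF e_sq[OF that] X_sq]
      using e_var[OF that] e_mean[OF that] X_mean[of "t - 1"] by (simp add: m2_def)
    moreover have "P.expectation (\<lambda>x. eps t x * X (t - 1) x) = 0"
      using X_eps[of "t - 1" t] that by simp
    ultimately show ?thesis by simp
  qed
  define k0 where "k0 = Kc - 1/2 + \<sigma>0^2/(2*\<sigma>^2)"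
  have Eeq: "(1 / real n) * P.expectation (\<lambda>x.
                  ln (ar_density \<rho>0 \<beta>0 \<sigma>0 z n (\<lambda>t. X t x) / ar_density \<rho> \<beta> \<sigma> z n (\<lambda>t. X t x)))
      = k0 + a^2/(2*\<sigma>^2) * ((1/real n) * (\<Sum>t=1..n. m2 (t - 1)))
           + 1/(2*\<sigma>^2) * ((1/real n) * (\<Sum>t=1..n. (dd t)^2))
           + a/\<sigma>^2 * ((1/real n) * (\<Sum>t=1..n. mu (t - 1) * dd t))"
    if n1: "n \<ge> 1" for n
  proof -
    have int: "integrable M (\<lambda>x. Kc + (R t x)^2 / (2*\<sigma>^2) - (eps t x)^2 / (2*\<sigma>0^2))"
      if "t \<in> {1..n}" for t
    proof -
      have "integrable M (\<lambda>x. (R t x)^2)" "integrable M (\<lambda>x. (eps t x)^2)"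
        using R_sq[of t] e_sq[of t] that by (auto simp: sqint_def)
      then show ?thesis by simp
    qed
    have "P.expectation (\<lambda>x. ln (ar_density \<rho>0 \<beta>0 \<sigma>0 z n (\<lambda>t. X t x) / ar_density \<rho> \<beta> \<sigma> z n (\<lambda>t. X t x)))
        = (\<Sum>t\<in>{1..n}. P.expectation (\<lambda>x. Kc + (R t x)^2 / (2*\<sigma>^2) - (eps t x)^2 / (2*\<sigma>0^2)))"
      unfolding logeq by (rule Bochner_Integration.integral_sum[OF int])
    also have "\<dots> = (\<Sum>t\<in>{1..n}. k0 + a^2/(2*\<sigma>^2) * m2 (t - 1) + 1/(2*\<sigma>^2) * (dd t)^2
                         + a/\<sigma>^2 * (mu (t - 1) * dd t))"
    proof (rule sum.cong)
      fix t assume t: "t \<in> {1..n}"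
      have i1: "integrable M (\<lambda>x. (R t x)^2)" and i2: "integrable M (\<lambda>x. (eps t x)^2)"
        using R_sq[of t] e_sq[of t] t by (auto simp: sqint_def)
      have "P.expectation (\<lambda>x. Kc + (R t x)^2 / (2*\<sigma>^2) - (eps t x)^2 / (2*\<sigma>0^2))
          = Kc + P.expectation (\<lambda>x. (R t x)^2) / (2*\<sigma>^2) - P.expectation (\<lambda>x. (eps t x)^2) / (2*\<sigma>0^2)"
        using i1 i2 by (simp add: P.prob_space)
      also have "\<dots> = k0 + a^2/(2*\<sigma>^2) * m2 (t - 1) + 1/(2*\<sigma>^2) * (dd t)^2 + a/\<sigma>^2 * (mu (t - 1) * dd t)"
        using ER[of t] e_var[of t] t s s0 unfolding k0_def by (simp add: field_simps power2_eq_square)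
      finally show "P.expectation (\<lambda>x. Kc + (R t x)^2 / (2*\<sigma>^2) - (eps t x)^2 / (2*\<sigma>0^2))
          = k0 + a^2/(2*\<sigma>^2) * m2 (t - 1) + 1/(2*\<sigma>^2) * (dd t)^2 + a/\<sigma>^2 * (mu (t - 1) * dd t)" .
    qed simp
    also have "\<dots> = real n * k0 + a^2/(2*\<sigma>^2) * (\<Sum>t=1..n. m2 (t - 1)) + 1/(2*\<sigma>^2) * (\<Sum>t=1..n. (dd t)^2)
                     + a/\<sigma>^2 * (\<Sum>t=1..n. mu (t - 1) * dd t)"
      by (simp add: sum.distrib sum_distrib_left)
    finally show ?thesis using n1 by (simp add: field_simps)
  qed
  have lim: "(\<lambda>n. k0 + a^2/(2*\<sigma>^2) * ((1/real n) * (\<Sum>t=1..n. m2 (t - 1)))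
           + 1/(2*\<sigma>^2) * ((1/real n) * (\<Sum>t=1..n. (dd t)^2))
           + a/\<sigma>^2 * ((1/real n) * (\<Sum>t=1..n. mu (t - 1) * dd t)))
       \<longlonglongrightarrow> k0 + a^2/(2*\<sigma>^2) * ((B + \<sigma>0^2) / (1 - \<rho>0^2)) + 1/(2*\<sigma>^2) * (w \<bullet> (\<Sigma>z *v w)) + a/\<sigma>^2 * 0"
    by (intro tendsto_intros L_m2 L_dd L_dx)
  have lim2: "(\<lambda>n. (1 / real n) * P.expectation (\<lambda>x.
                  ln (ar_density \<rho>0 \<beta>0 \<sigma>0 z n (\<lambda>t. X t x) / ar_density \<rho> \<beta> \<sigma> z n (\<lambda>t. X t x))))
       \<longlonglongrightarrow> k0 + a^2/(2*\<sigma>^2) * ((B + \<sigma>0^2) / (1 - \<rho>0^2)) + 1/(2*\<sigma>^2) * (w \<bullet> (\<Sigma>z *v w)) + a/\<sigma>^2 * 0"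
  proof (rule Lim_transform_eventually[OF lim])
    show "\<forall>\<^sub>F n in sequentially. k0 + a^2/(2*\<sigma>^2) * ((1/real n) * (\<Sum>t=1..n. m2 (t - 1)))
           + 1/(2*\<sigma>^2) * ((1/real n) * (\<Sum>t=1..n. (dd t)^2))
           + a/\<sigma>^2 * ((1/real n) * (\<Sum>t=1..n. mu (t - 1) * dd t))
         = (1 / real n) * P.expectation (\<lambda>x.
                  ln (ar_density \<rho>0 \<beta>0 \<sigma>0 z n (\<lambda>t. X t x) / ar_density \<rho> \<beta> \<sigma> z n (\<lambda>t. X t x)))"
      using eventually_ge_at_top[of 1]
    proof eventually_elim
      case (elim n)
      show ?case by (rule Eeq[OF elim, symmetric])
    qed
  qed

  define Pb where "Pb = \<beta> \<bullet> (\<Sigma>z *v \<beta>)"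
  define Qb where "Qb = \<beta> \<bullet> (\<Sigma>z *v \<beta>0)"
  have sym: "\<beta>0 \<bullet> (\<Sigma>z *v \<beta>) = Qb"
  proof -
    have l1: "(\<lambda>n. (1/real n) * (\<Sum>t=1..n. (z t \<bullet> \<beta>) * (z t \<bullet> \<beta>0))) \<longlonglongrightarrow> \<beta> \<bullet> (\<Sigma>z *v \<beta>0)"
      by (rule avg_outer[OF B1c])
    have l2: "(\<lambda>n. (1/real n) * (\<Sum>t=1..n. (z t \<bullet> \<beta>) * (z t \<bullet> \<beta>0))) \<longlonglongrightarrow> \<beta>0 \<bullet> (\<Sigma>z *v \<beta>)"
      using avg_outer[OF B1c, of \<beta>0 \<beta>] by (simp add: mult.commute)
    show ?thesis using LIMSEQ_unique[OF l2 l1] by (simp add: Qb_def)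
  qed
  have ww: "w \<bullet> (\<Sigma>z *v w) = B - 2 * Qb + Pb"
    unfolding w_def B_def Pb_def Qb_def
    using sym by (simp add: matrix_vector_mult_diff_distrib inner_diff_left inner_diff_right Qb_def)
  have vv: "((1 / \<sigma>\<^sup>2) *\<^sub>R \<beta> - (1 / \<sigma>0\<^sup>2) *\<^sub>R \<beta>0) \<bullet> (\<Sigma>z *v \<beta>0) = Qb / \<sigma>^2 - B / \<sigma>0^2"
    unfolding Qb_def B_def by (simp add: inner_diff_left)
  have target: "k0 + a^2/(2*\<sigma>^2) * ((B + \<sigma>0^2) / (1 - \<rho>0^2)) + 1/(2*\<sigma>^2) * (w \<bullet> (\<Sigma>z *v w)) + a/\<sigma>^2 * 0
     = ln (\<sigma> / \<sigma>0)
            + (1 / (2 * \<sigma>\<^sup>2) - 1 / (2 * \<sigma>0\<^sup>2)) * ((\<sigma>0\<^sup>2 + \<beta>0 \<bullet> (\<Sigma>z *v \<beta>0)) / (1 - \<rho>0\<^sup>2))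
            + (\<rho>\<^sup>2 / (2 * \<sigma>\<^sup>2) - \<rho>0\<^sup>2 / (2 * \<sigma>0\<^sup>2)) * ((\<sigma>0\<^sup>2 + \<beta>0 \<bullet> (\<Sigma>z *v \<beta>0)) / (1 - \<rho>0\<^sup>2))
            + \<beta> \<bullet> (\<Sigma>z *v \<beta>) / (2 * \<sigma>\<^sup>2)
            - \<beta>0 \<bullet> (\<Sigma>z *v \<beta>0) / (2 * \<sigma>0\<^sup>2)
            - (\<rho> / \<sigma>\<^sup>2 - \<rho>0 / \<sigma>0\<^sup>2) * \<rho>0 * ((\<sigma>0\<^sup>2 + \<beta>0 \<bullet> (\<Sigma>z *v \<beta>0)) / (1 - \<rho>0\<^sup>2))
            - ((1 / \<sigma>\<^sup>2) *\<^sub>R \<beta> - (1 / \<sigma>0\<^sup>2) *\<^sub>R \<beta>0) \<bullet> (\<Sigma>z *v \<beta>0)"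
    unfolding vv ww k0_def a_def Kc_def B_def[symmetric] Pb_def[symmetric]
    using final_alg[OF s s0 r0, of "ln (\<sigma> / \<sigma>0)" \<rho> B Qb Pb] by simp
  show ?thesis
    unfolding Let_def X_def[symmetric] using lim2 unfolding target .
qed

end
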